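(* Let $X\xrightarrow{f}Y\xrightarrow{g}Z$ be continuous maps between topological spaces, with $f$ surjective. If $f$ and $g\circ f$ are Serre fibrations, then $g$ is a Serre fibration.
   Context: A map $p\colon E\to B$ is a Serre fibration if for every $n\geq1$ and every commutative square with top map $[0,1]^{n-1}\times\{0\}\to E$, bottom map $[0,1]^n\to B$ and left map the inclusion, there is a map $[0,1]^n\to E$ making both triangles commute. *)

theory Defs
  imports "HOL-Analysis.Analysis"
begin

definition cube :: "nat \<Rightarrow> (nat \<Rightarrow> real) topology" where
  "cube n = product_topology (\<lambda>i. top_of_set {0..1::real}) {..<n}"

definition cube_base :: "nat \<Rightarrow> (nat \<Rightarrow> real) topology" where
  "cube_base n = subtopology (cube n) {x \<in> topspace (cube n). x (n - 1) = 0}"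

definition serre_fibration :: "'e topology \<Rightarrow> 'b topology \<Rightarrow> ('e \<Rightarrow> 'b) \<Rightarrow> bool" where
  "serre_fibration E B p \<longleftrightarrow> continuous_map E B p \<and>
     (\<forall>n\<ge>1. \<forall>h H. continuous_map (cube_base n) E h \<and> continuous_map (cube n) B H \<and>
        (\<forall>x\<in>topspace (cube_base n). p (h x) = H x) \<longrightarrow>
        (\<exists>L. continuous_map (cube n) E L \<and>
             (\<forall>x\<in>topspace (cube_base n). L x = h x) \<and>
             (\<forall>x\<in>topspace (cube n). p (L x) = H x)))"

end

theory Submission
  imports Defs
begin

lemma topspace_cube: "topspace (cube n) = (\<Pi>\<^sub>E i\<in>{..<n}. {0..1::real})"
  by (simp add: cube_def topspace_product_topology)

lemma topspace_cube_base:
  "topspace (cube_base n) = {x \<in> topspace (cube n). x (n - 1) = 0}"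
  by (auto simp: cube_base_def)

lemma proj_cont:
  assumes "k < n"
  shows "continuous_map (cube n) euclideanreal (\<lambda>x. x k)"
proof -
  have "continuous_map (cube n) (top_of_set {0..1}) (\<lambda>x. x k)"
    unfolding cube_def using assms by (intro continuous_map_product_projection) auto
  then show ?thesis by (simp add: continuous_map_in_subtopology)
qed

lemma lift_base:
  assumes fX: "continuous_map X Y f" and surj: "f ` topspace X = topspace Y"
    and sf: "serre_fibration X Y f"
    and h: "continuous_map (cube_base n) Y h" and n: "n \<ge> 1"
  shows "\<exists>h'. continuous_map (cube_base n) X h' \<and>
           (\<forall>x\<in>topspace (cube_base n). f (h' x) = h x)"
proof -
  define c where "c = (\<lambda>x::nat\<Rightarrow>real. (\<lambda>i. if i < n - 1 then x n * x i else if i = n - 1 then 0 else undefined))"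
  define z0 where "z0 = (\<lambda>i::nat. if i < n - 1 then 0 else if i = n - 1 then (0::real) else undefined)"
  have cmap: "continuous_map (cube (Suc n)) (cube_base n) c"
    unfolding cube_base_def
  proof (rule continuous_map_into_subtopology)
    show "continuous_map (cube (Suc n)) (cube n) c"
      unfolding cube_def[of n]
    proof (subst continuous_map_componentwise, intro conjI ballI)
      show "c ` topspace (cube (Suc n)) \<subseteq> extensional {..<n}"
        using n by (auto simp: c_def extensional_def)
      fix k assume k: "k \<in> {..<n}"
      show "continuous_map (cube (Suc n)) (top_of_set {0..1}) (\<lambda>x. c x k)"
      proof (cases "k < n - 1")
        case True
        have "continuous_map (cube (Suc n)) euclideanreal (\<lambda>x. x n * x k)"
          using True by (intro continuous_map_real_mult proj_cont) auto
        moreover have "(\<lambda>x. x n * x k) ` topspace (cube (Suc n)) \<subseteq> {0..1}"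
        proof
          fix y assume "y \<in> (\<lambda>x. x n * x k) ` topspace (cube (Suc n))"
          then obtain x where x: "x \<in> topspace (cube (Suc n))" and y: "y = x n * x k" by auto
          have "x n \<in> {0..1}" "x k \<in> {0..1}" using x True by (auto simp: topspace_cube PiE_def Pi_def)
          then show "y \<in> {0..1}" using y by (auto intro: mult_le_one)
        qed
        ultimately show ?thesis using True
          by (simp add: c_def continuous_map_in_subtopology image_subset_iff_funcset)
      next
        case False
        then have "k = n - 1" using k by auto
        then show ?thesis using False by (simp add: c_def)
      qed
    qed
    have "c ` topspace (cube (Suc n)) \<subseteq> {x \<in> topspace (cube n). x (n - 1) = 0}"
    proof (rule subsetI)
      fix y assume "y \<in> c ` topspace (cube (Suc n))"
      then obtain x where x: "x \<in> topspace (cube (Suc n))" and y: "y = c x" by auto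
      have "\<forall>i<n - 1. x n * x i \<in> {0..1}"
      proof (intro allI impI)
        fix i assume "i < n - 1"
        then have "x n \<in> {0..1}" "x i \<in> {0..1}" using x by (auto simp: topspace_cube PiE_def Pi_def)
        then show "x n * x i \<in> {0..1}" by (auto intro: mult_le_one)
      qed
      then show "y \<in> {x \<in> topspace (cube n). x (n - 1) = 0}"
        using n by (auto simp: y c_def topspace_cube PiE_def Pi_def extensional_def)
    qed
    then show "c \<in> topspace (cube (Suc n)) \<rightarrow> {x \<in> topspace (cube n). x (n - 1) = 0}"
      by (simp add: image_subset_iff_funcset)
  qed
  have z0: "z0 \<in> topspace (cube_base n)"
    using n by (auto simp: z0_def topspace_cube_base topspace_cube PiE_def extensional_def)
  then have "h z0 \<in> topspace Y" using h by (metis continuous_map_image_subset_topspace image_subset_iff)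
  then obtain a where a: "a \<in> topspace X" "f a = h z0" using surj by (metis imageE)
  have hc: "continuous_map (cube (Suc n)) Y (h \<circ> c)" using cmap h by (rule continuous_map_compose)
  have base: "\<forall>x\<in>topspace (cube_base (Suc n)). c x = z0"
    by (auto simp: topspace_cube_base c_def z0_def)
  obtain L where L: "continuous_map (cube (Suc n)) X L"
      "\<forall>x\<in>topspace (cube (Suc n)). f (L x) = (h \<circ> c) x"
    using sf unfolding serre_fibration_def
    apply (elim conjE)
    apply (drule spec[of _ "Suc n"])
    apply (drule mp, simp)
    apply (drule spec[of _ "\<lambda>_. a"])
    apply (drule spec[of _ "h \<circ> c"])
    using a base hc by auto
  define e where "e = (\<lambda>y::nat\<Rightarrow>real. y(n := 1))"
  have emap: "continuous_map (cube_base n) (cube (Suc n)) e"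
    unfolding cube_def[of "Suc n"]
  proof (subst continuous_map_componentwise, intro conjI ballI)
    show "e ` topspace (cube_base n) \<subseteq> extensional {..<Suc n}"
      by (auto simp: e_def extensional_def topspace_cube_base topspace_cube PiE_def)
    fix k assume k: "k \<in> {..<Suc n}"
    show "continuous_map (cube_base n) (top_of_set {0..1}) (\<lambda>x. e x k)"
    proof (cases "k = n")
      case True then show ?thesis by (simp add: e_def)
    next
      case False
      then have "k < n" using k by auto
      then have "continuous_map (cube n) (top_of_set {0..1}) (\<lambda>x. x k)"
        unfolding cube_def by (intro continuous_map_product_projection) auto
      then have "continuous_map (cube_base n) (top_of_set {0..1}) (\<lambda>x. x k)"
        unfolding cube_base_def by (rule continuous_map_from_subtopology)
      then show ?thesis using False by (simp add: e_def)
    qed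
  qed
  have ce: "c (e y) = y" if "y \<in> topspace (cube_base n)" for y
  proof
    fix i
    show "c (e y) i = y i"
      using that n by (auto simp: c_def e_def topspace_cube_base topspace_cube PiE_def extensional_def)
  qed
  show ?thesis
  proof (intro exI conjI ballI)
    show "continuous_map (cube_base n) X (L \<circ> e)"
      using emap L(1) by (rule continuous_map_compose)
    fix x assume x: "x \<in> topspace (cube_base n)"
    have "e x \<in> topspace (cube (Suc n))" using emap x by (metis continuous_map_image_subset_topspace image_subset_iff)
    then show "f ((L \<circ> e) x) = h x" using L(2) ce[OF x] by auto
  qed
qed

theorem propositionA1:
  fixes X :: "'a topology" and Y :: "'b topology" and Z :: "'c topology"
    and f :: "'a \<Rightarrow> 'b" and g :: "'b \<Rightarrow> 'c"
  assumes "continuous_map X Y f" and "continuous_map Y Z g"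
    and "f ` topspace X = topspace Y"
    and "serre_fibration X Y f" and "serre_fibration X Z (g \<circ> f)"
  shows "serre_fibration Y Z g"
  unfolding serre_fibration_def
proof (intro conjI allI impI)
  show "continuous_map Y Z g" by fact
  fix n :: nat and h H
  assume n: "n \<ge> 1"
    and hyp: "continuous_map (cube_base n) Y h \<and> continuous_map (cube n) Z H \<and>
        (\<forall>x\<in>topspace (cube_base n). g (h x) = H x)"
  obtain h' where h': "continuous_map (cube_base n) X h'"
      "\<forall>x\<in>topspace (cube_base n). f (h' x) = h x"
    using lift_base[OF assms(1,3,4) _ n] hyp by blast
  obtain L where L: "continuous_map (cube n) X L"
      "\<forall>x\<in>topspace (cube_base n). L x = h' x"
      "\<forall>x\<in>topspace (cube n). (g \<circ> f) (L x) = H x"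
    using assms(5) unfolding serre_fibration_def
    apply (elim conjE)
    apply (drule spec[of _ n])
    apply (drule mp, rule n)
    apply (drule spec[of _ h'])
    apply (drule spec[of _ H])
    using h' hyp by auto
  show "\<exists>L. continuous_map (cube n) Y L \<and>
             (\<forall>x\<in>topspace (cube_base n). L x = h x) \<and>
             (\<forall>x\<in>topspace (cube n). g (L x) = H x)"
    apply (rule exI[of _ "f \<circ> L"])
    using L h' continuous_map_compose[OF L(1) assms(1)] by auto
qed

end
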